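(* Let $U=\{z\in\mathbb{C}: |z|<1\}$ and, for $k\in\mathbb{C}$, let $$\Sigma_k=\{w=0\}\cup\{w=1\}\cup\{w=kz\}\cup\{zw=1\}\subset\mathbb{C}^2,$$ where $(z,w)$ are the coordinates on $\mathbb{C}^2$. Then there exists $k>0$ such that for every holomorphic function $f\colon U\to\mathbb{C}$ the graph $\{(z,f(z)): z\in U\}$ intersects $\Sigma_k$ (indeed this holds for every $k\in\mathbb{C}$ with $|k|$ sufficiently large). On the other hand, for every $k$ there exists a smooth function $U\to\mathbb{C}$ whose graph does not intersect $\Sigma_k$. *)

theory Defs
  imports "HOL-Analysis.Analysis"
begin

fun Ck_on :: "nat \<Rightarrow> 'a::real_normed_vector set \<Rightarrow> ('a \<Rightarrow> 'b::real_normed_vector) \<Rightarrow> bool" where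
  "Ck_on 0 S f = continuous_on S f"
| "Ck_on (Suc n) S f = (\<exists>f'. (\<forall>x\<in>S. (f has_derivative f' x) (at x)) \<and>
                             (\<forall>v. Ck_on n S (\<lambda>x. f' x v)))"

definition smooth_on :: "'a::real_normed_vector set \<Rightarrow> ('a \<Rightarrow> 'b::real_normed_vector) \<Rightarrow> bool" where
  "smooth_on S f = (\<forall>n. Ck_on n S f)"

definition graph_meets_Sigma :: "complex \<Rightarrow> complex set \<Rightarrow> (complex \<Rightarrow> complex) \<Rightarrow> bool" where
  "graph_meets_Sigma k S f = (\<exists>z\<in>S. f z = 0 \<or> f z = 1 \<or> f z = k * z \<or> z * f z = 1)"

end

theory Submission
  imports Defs "HOL-Complex_Analysis.Complex_Analysis"
begin


lemma quad_Ck: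
  "Ck_on n S (\<lambda>z::complex. A + B * complex_of_real (Re (c*z)) + C * (complex_of_real (Re (c*z)))^2)"
proof (induction n arbitrary: A B C)
  case 0
  then show ?case by (simp, intro continuous_intros)
next
  case (Suc n)
  let ?L = "\<lambda>z::complex. complex_of_real (Re (c*z))"
  have bl: "bounded_linear ?L"
    by (intro bounded_linear_compose[OF bounded_linear_of_real] bounded_linear_compose[OF bounded_linear_Re] bounded_linear_mult_right)
  have dL: "(?L has_derivative ?L) (at x)" for x
    using bl by (rule bounded_linear_imp_has_derivative)
  define f' where "f' = (\<lambda>x v. B * ?L v + 2 * C * ?L x * ?L v)"
  have der: "((\<lambda>z. A + B * ?L z + C * (?L z)^2) has_derivative f' x) (at x)" for x
    unfolding f'_def
    by (rule derivative_eq_intros dL refl | simp)+ (auto simp: algebra_simps)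
  have ck: "Ck_on n S (\<lambda>x. f' x v)" for v
  proof -
    have "Ck_on n S (\<lambda>z. B * ?L v + (2 * C * ?L v) * ?L z + 0 * (?L z)^2)"
      by (rule Suc.IH)
    moreover have "(\<lambda>z. B * ?L v + (2 * C * ?L v) * ?L z + 0 * (?L z)^2) = (\<lambda>x. f' x v)"
      by (auto simp: f'_def algebra_simps)
    ultimately show ?thesis by simp
  qed
  show ?case using der ck by auto
qed

lemma part3: "\<exists>f. smooth_on (ball 0 1) f \<and> \<not> graph_meets_Sigma k (ball 0 1) f"
proof -
  define e :: complex where "e = (if Im k = 0 then 1 + \<i> else -1)"
  define c where "c = \<i> * e"
  define s where "s = Re (\<i> * e^2 / k)"
  define d where "d = 1 / s^2"
  define f where "f = (\<lambda>z. e * complex_of_real (1/2 + d * (Re (c*z))^2))"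
  have "smooth_on (ball 0 1) f"
  proof -
    have "f = (\<lambda>z. e/2 + 0 * complex_of_real (Re (c*z)) + (e * of_real d) * (complex_of_real (Re (c*z)))^2)"
      by (auto simp: f_def algebra_simps)
    then show ?thesis unfolding smooth_on_def using quad_Ck by metis
  qed
  moreover have "\<not> graph_meets_Sigma k (ball 0 1) f"
  proof
    assume "graph_meets_Sigma k (ball 0 1) f"
    then obtain z where z: "norm z < 1" and alt: "f z = 0 \<or> f z = 1 \<or> f z = k * z \<or> z * f z = 1"
      by (auto simp: graph_meets_Sigma_def)
    define \<rho> where "\<rho> = 1/2 + d * (Re (c*z))^2"
    have d0: "d \<ge> 0" by (simp add: d_def)
    have rho: "\<rho> > 0" unfolding \<rho>_def using d0 by (simp add: add_pos_nonneg)
    have fz: "f z = e * of_real \<rho>" by (simp add: f_def \<rho>_def)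
    have e0: "e \<noteq> 0" by (simp add: e_def complex_eq_iff)
    have ne: "norm e \<le> 2"
    proof (cases "Im k = 0")
      case True
      have "norm (1 + \<i>) = sqrt 2" by (simp add: cmod_def)
      also have "\<dots> \<le> 2" using real_sqrt_le_mono[of 2 4] by simp
      finally show ?thesis using True by (simp add: e_def)
    qed (simp add: e_def)
    consider "f z = 0" | "f z = 1" | "f z = k * z" | "z * f z = 1" using alt by blast
    then show False
    proof cases
      case 1 then show ?thesis using fz e0 rho by simp
    next
      case 2
      show ?thesis
      proof (cases "Im k = 0")
        case True
        then have "Im (f z) = \<rho>" by (simp add: fz e_def)
        then show ?thesis using 2 rho by simp
      next
        case False
        then have "Re (f z) = - \<rho>" by (simp add: fz e_def)
        then show ?thesis using 2 rho by simp
      qed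
    next
      case 3
      have k0: "k \<noteq> 0" using 3 fz e0 rho by auto
      have s0: "s \<noteq> 0"
      proof (cases "Im k = 0")
        case True
        then have "k = of_real (Re k)" by (simp add: complex_eq_iff)
        then have "s = - 2 / Re k" using True
          by (simp add: s_def e_def power2_eq_square algebra_simps Re_divide)
        then show ?thesis using k0 True by (auto simp: complex_eq_iff)
      next
        case False
        then have "s = Im k / (cmod k)^2"
          by (simp add: s_def e_def Re_divide cmod_power2)
        then show ?thesis using False k0 by simp
      qed
      have zz: "z = e * of_real \<rho> / k" using 3 fz k0 by (simp add: field_simps)
      have "c * z = (\<i> * e^2 / k) * of_real \<rho>" by (simp add: zz c_def power2_eq_square field_simps)
      moreover have "Re ((\<i> * e^2 / k) * of_real \<rho>) = Re (\<i> * e^2 / k) * \<rho>"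
        by (simp only: times_complex.sel Re_complex_of_real Im_complex_of_real)
      ultimately have "Re (c*z) = s * \<rho>" by (simp only: s_def)
      moreover have r: "\<rho> = 1/2 + d * (Re (c*z))^2" by (fact \<rho>_def)
      ultimately have "\<rho> = 1/2 + d * (s * \<rho>)^2" by (simp only:)
      then have "\<rho> = 1/2 + d * s^2 * \<rho>^2" by (simp only: power_mult_distrib mult.assoc)
      then have "\<rho> = 1/2 + \<rho>^2" using s0 by (simp add: d_def)
      moreover have "(\<rho> - 1/2)^2 + 1/4 > 0" by (simp add: add_nonneg_pos)
      ultimately show False by (simp add: power2_eq_square algebra_simps)
    next
      case 4
      then have ez: "e * z = 1 / of_real \<rho>" using fz rho by (simp add: field_simps)
      have "c * z = \<i> / of_real \<rho>" by (simp add: c_def ez mult.assoc)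
      then have "Re (c*z) = 0" by (simp add: Re_divide)
      then have "\<rho> = 1/2" by (simp add: \<rho>_def)
      then have "e * z = 1 / complex_of_real (1/2)" using ez by (simp only:)
      then have "e * z = 2" by simp
      then have "norm (e * z) = 2" by simp
      then have "norm e * norm z = 2" by (simp only: norm_mult)
      moreover have "norm e * norm z < 2"
      proof -
        have "norm e * norm z \<le> 2 * norm z" using ne by (simp add: mult_right_mono)
        then show ?thesis using z by linarith
      qed
      ultimately show False by simp
    qed
  qed
  ultimately show ?thesis by blast
qed



lemma zero_exists:
  fixes p :: "complex \<Rightarrow> complex"
  assumes holp: "p holomorphic_on ball 0 1" and r: "0 < r" "r < 1"
    and m0: "norm (p 0) < m" and mz: "\<And>z. norm z = r \<Longrightarrow> m \<le> norm (p z)"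
  shows "\<exists>z\<in>cball 0 r. p z = 0"
proof (rule ccontr)
  assume "\<not> ?thesis"
  then have nz: "\<And>z. z \<in> cball 0 r \<Longrightarrow> p z \<noteq> 0" by blast
  have sub: "cball 0 r \<subseteq> ball (0::complex) 1" using r by (simp add: cball_subset_ball_iff)
  have hol: "p holomorphic_on cball 0 r" using holomorphic_on_subset[OF holp sub] .
  have holq: "(\<lambda>z. inverse (p z)) holomorphic_on cball 0 r"
    using hol nz by (intro holomorphic_intros) auto
  have m: "m > 0" using m0 norm_ge_zero[of "p 0"] by linarith
  have "norm (inverse (p 0)) \<le> inverse m"
  proof (rule maximum_modulus_frontier[of "\<lambda>z. inverse (p z)" "cball 0 r"])
    have "interior (cball (0::complex) r) \<subseteq> cball 0 r" by (rule interior_subset)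
    then show "(\<lambda>z. inverse (p z)) holomorphic_on interior (cball 0 r)"
      using holq by (rule holomorphic_on_subset[rotated])
    have "continuous_on (cball 0 r) (\<lambda>z. inverse (p z))"
      using holq by (rule holomorphic_on_imp_continuous_on)
    then show "continuous_on (closure (cball 0 r)) (\<lambda>z. inverse (p z))"
      by (simp only: closure_closed[OF closed_cball])
    show "bounded (cball (0::complex) r)" by (rule bounded_cball)
    show "0 \<in> cball (0::complex) r" using r by simp
    fix z assume "z \<in> frontier (cball (0::complex) r)"
    then have "norm z = r" using r by (simp only: frontier_cball mem_sphere_0)
    then have "m \<le> norm (p z)" by (rule mz)
    then have "inverse (norm (p z)) \<le> inverse m"
      using m by (rule le_imp_inverse_le)
    then show "norm (inverse (p z)) \<le> inverse m"
      by (simp only: norm_inverse)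
  qed
  moreover have "p 0 \<noteq> 0" using nz r by simp
  ultimately have "inverse (norm (p 0)) \<le> inverse m" by (simp only: norm_inverse)
  then have "m \<le> norm (p 0)"
    using \<open>p 0 \<noteq> 0\<close> by (simp add: inverse_le_imp_le)
  then show False using m0 by simp
qed


lemma small_lemma:
  obtains \<delta> :: real where "\<delta> > 0"
    "\<And>h z. h holomorphic_on ball 0 1 \<Longrightarrow> (\<forall>z\<in>ball 0 1. h z \<noteq> 0 \<and> h z \<noteq> 1)
       \<Longrightarrow> norm (h 0) < \<delta> \<Longrightarrow> norm z \<le> 1/4 \<Longrightarrow> norm (h z) \<le> 1/16"
proof -
  have "\<exists>\<delta>>0. \<forall>h z. h holomorphic_on ball 0 1 \<longrightarrow> (\<forall>z\<in>ball 0 1. h z \<noteq> 0 \<and> h z \<noteq> 1)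
       \<longrightarrow> norm (h 0) < \<delta> \<longrightarrow> norm z \<le> 1/4 \<longrightarrow> norm (h z) \<le> 1/16"
  proof (rule ccontr)
    assume "\<not> ?thesis"
    then have neg: "\<forall>\<delta>>0. \<exists>h z. h holomorphic_on ball 0 1 \<and> (\<forall>z\<in>ball 0 1. h z \<noteq> 0 \<and> h z \<noteq> 1)
       \<and> norm (h 0) < \<delta> \<and> norm z \<le> 1/4 \<and> norm (h z) > 1/16"
      by (simp add: not_le)
    have "\<forall>n::nat. \<exists>h z. h holomorphic_on ball 0 1 \<and> (\<forall>z\<in>ball 0 1. h z \<noteq> 0 \<and> h z \<noteq> 1)
       \<and> norm (h 0) < 1 / Suc n \<and> norm z \<le> 1/4 \<and> norm (h z) > 1/16"
    proof
      fix n :: nat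
      have pos: "1 / real (Suc n) > 0" by simp
      show "\<exists>h z. h holomorphic_on ball 0 1 \<and> (\<forall>z\<in>ball 0 1. h z \<noteq> 0 \<and> h z \<noteq> 1)
       \<and> norm (h 0) < 1 / Suc n \<and> norm z \<le> 1/4 \<and> norm (h z) > 1/16"
        using neg[rule_format, OF pos] .
    qed
    then have "\<exists>H. \<forall>n::nat. \<exists>z. H n holomorphic_on ball 0 1 \<and> (\<forall>z\<in>ball 0 1. H n z \<noteq> 0 \<and> H n z \<noteq> 1)
       \<and> norm (H n 0) < 1 / Suc n \<and> norm z \<le> 1/4 \<and> norm (H n z) > 1/16"
      by (rule choice)
    then obtain H where "\<forall>n::nat. \<exists>z. H n holomorphic_on ball 0 1 \<and> (\<forall>z\<in>ball 0 1. H n z \<noteq> 0 \<and> H n z \<noteq> 1)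
       \<and> norm (H n 0) < 1 / Suc n \<and> norm z \<le> 1/4 \<and> norm (H n z) > 1/16"
      by (elim exE)
    then have "\<exists>Z. \<forall>n::nat. H n holomorphic_on ball 0 1 \<and> (\<forall>z\<in>ball 0 1. H n z \<noteq> 0 \<and> H n z \<noteq> 1)
       \<and> norm (H n 0) < 1 / Suc n \<and> norm (Z n) \<le> 1/4 \<and> norm (H n (Z n)) > 1/16"
      by (rule choice)
    then obtain Z where HZ0: "\<forall>n::nat. H n holomorphic_on ball 0 1 \<and> (\<forall>z\<in>ball 0 1. H n z \<noteq> 0 \<and> H n z \<noteq> 1)
       \<and> norm (H n 0) < 1 / Suc n \<and> norm (Z n) \<le> 1/4 \<and> norm (H n (Z n)) > 1/16"
      by (elim exE)
    have HZ: "\<And>n. H n holomorphic_on ball 0 1"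
       "\<And>n. \<forall>z\<in>ball 0 1. H n z \<noteq> 0 \<and> H n z \<noteq> 1"
       "\<And>n. norm (H n 0) < 1 / Suc n" "\<And>n. norm (Z n) \<le> 1/4" "\<And>n. norm (H n (Z n)) > 1/16"
      using HZ0 by blast+
    define X where "X = {h. h holomorphic_on ball 0 1 \<and> (\<forall>z\<in>ball 0 1. h z \<noteq> 0 \<and> h z \<noteq> 1)}"
    have rX: "range H \<subseteq> X" using HZ by (auto simp: X_def)
    have le1: "norm (H n 0) \<le> 1" for n
    proof -
      have "1 / real (Suc n) \<le> 1" by simp
      then show ?thesis using HZ(3)[of n] by linarith
    qed
    have bnd: "\<exists>B. \<forall>h\<in>range H. \<forall>z\<in>K. norm (h z) \<le> B" if cK: "compact K" and sK: "K \<subseteq> ball 0 1" for K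
    proof -
      obtain B where "\<And>h z. \<lbrakk>h \<in> range H; z \<in> K\<rbrakk> \<Longrightarrow> norm(h z) \<le> B"
      proof (rule GPicard3[of "ball 0 1" 0 "range H" X K])
        show "\<And>h. h \<in> X \<Longrightarrow> h holomorphic_on ball 0 1" by (auto simp: X_def)
        show "\<And>h z. \<lbrakk>h \<in> X; z \<in> ball 0 1\<rbrakk> \<Longrightarrow> h z \<noteq> 0 \<and> h z \<noteq> 1" by (auto simp: X_def)
        show "\<And>h. h \<in> range H \<Longrightarrow> norm (h 0) \<le> 1" using le1 by auto
        show "open (ball (0::complex) 1)" by simp
        show "connected (ball (0::complex) 1)" by simp
        show "(0::complex) \<in> ball 0 1" by simp
        show "range H \<subseteq> X" by (rule rX)
        show "compact K" by (rule cK)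
        show "K \<subseteq> ball 0 1" by (rule sK)
      qed blast
      then show ?thesis by blast
    qed
    obtain G r where G: "G holomorphic_on ball 0 1" "strict_mono (r :: nat \<Rightarrow> nat)"
          "\<And>x. x \<in> ball 0 1 \<Longrightarrow> ((\<lambda>n. H (r n) x) \<longlonglongrightarrow> G x)"
          "\<And>K. \<lbrakk>compact K; K \<subseteq> ball 0 1\<rbrakk> \<Longrightarrow> uniform_limit K (H \<circ> r) G sequentially"
    proof (rule Montel[of "ball 0 1" "range H" H])
      show "open (ball (0::complex) 1)" by simp
      show "\<And>h. h \<in> range H \<Longrightarrow> h holomorphic_on ball 0 1" using HZ(1) by auto
      show "\<And>K. compact K \<Longrightarrow> K \<subseteq> ball 0 1 \<Longrightarrow> \<exists>B. \<forall>h\<in>range H. \<forall>z\<in>K. norm (h z) \<le> B"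
        by (rule bnd)
      show "range H \<subseteq> range H" by simp
    qed blast
    have lim0: "(\<lambda>n. H (r n) 0) \<longlonglongrightarrow> 0"
    proof (rule Lim_null_comparison[where g = "\<lambda>n. 1 / real (Suc (r n))"])
      show "\<forall>\<^sub>F n in sequentially. norm (H (r n) 0) \<le> 1 / real (Suc (r n))"
        using HZ(3) by (simp add: less_imp_le)
      have l1: "(\<lambda>n. 1 / real (Suc n)) \<longlonglongrightarrow> 0" using LIMSEQ_inverse_real_of_nat by (simp add: inverse_eq_divide)
      show "(\<lambda>n. 1 / real (Suc (r n))) \<longlonglongrightarrow> 0"
        using LIMSEQ_subseq_LIMSEQ[OF l1 G(2)] by (simp add: o_def)
    qed
    have G0: "G 0 = 0"
      using LIMSEQ_unique[OF G(3)[of 0] lim0] by simp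
    have Gz: "G z = 0" if "z \<in> ball 0 1" for z
    proof (cases "G constant_on ball 0 1")
      case True
      then obtain c where "\<forall>z\<in>ball 0 1. G z = c" by (auto simp: constant_on_def)
      then have "G z = c" "G 0 = c" using that by auto
      then show ?thesis using G0 by simp
    next
      case False
      have "G 0 \<noteq> 0"
      proof (rule Hurwitz_no_zeros[of "ball 0 1" "H \<circ> r" G])
        show "\<And>n. (H \<circ> r) n holomorphic_on ball 0 1" using HZ(1) by simp
        show "\<And>n z. z \<in> ball 0 1 \<Longrightarrow> (H \<circ> r) n z \<noteq> 0" using HZ(2) by simp
        show "open (ball (0::complex) 1)" by simp
        show "connected (ball (0::complex) 1)" by simp
        show "G holomorphic_on ball 0 1" by (rule G(1))
        show "\<And>K. compact K \<Longrightarrow> K \<subseteq> ball 0 1 \<Longrightarrow> uniform_limit K (H \<circ> r) G sequentially"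
          by (rule G(4))
        show "\<not> G constant_on ball 0 1" by (rule False)
        show "(0::complex) \<in> ball 0 1" by simp
      qed
      then show ?thesis using G0 by simp
    qed
    have "uniform_limit (cball 0 (1/4)) (H \<circ> r) G sequentially"
      by (rule G(4)) auto
    then have u: "\<forall>e>0. \<exists>N. \<forall>n\<ge>N. \<forall>x\<in>cball 0 (1/4). dist ((H \<circ> r) n x) (G x) < e"
      unfolding uniform_limit_sequentially_iff .
    have pos: "(0::real) < 1/16" by simp
    obtain N where N: "\<forall>n\<ge>N. \<forall>x\<in>cball 0 (1/4). dist ((H \<circ> r) n x) (G x) < 1/16"
      using u[rule_format, OF pos] by (elim exE)
    have zc: "Z (r N) \<in> cball 0 (1/4)" using HZ(4) by simp
    have "dist ((H \<circ> r) N (Z (r N))) (G (Z (r N))) < 1/16"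
      using N zc by blast
    then have d1: "dist (H (r N) (Z (r N))) (G (Z (r N))) < 1/16" by simp
    have "Z (r N) \<in> ball 0 1" using HZ(4)[of "r N"] by simp
    then have "G (Z (r N)) = 0" by (rule Gz)
    with d1 have "norm (H (r N) (Z (r N))) < 1/16" by (simp add: dist_norm)
    then show False using HZ(5)[of "r N"] by simp
  qed
  then obtain \<delta> where d1: "\<delta> > 0" and d2: "\<forall>h z. h holomorphic_on ball 0 1 \<longrightarrow> (\<forall>z\<in>ball 0 1. h z \<noteq> 0 \<and> h z \<noteq> 1)
       \<longrightarrow> norm (h 0) < \<delta> \<longrightarrow> norm z \<le> 1/4 \<longrightarrow> norm (h z) \<le> 1/16"
    by (elim exE conjE)
  show ?thesis
  proof (rule that[OF d1])
    fix h and z :: complex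
    assume "h holomorphic_on ball 0 1" "\<forall>z\<in>ball 0 1. h z \<noteq> 0 \<and> h z \<noteq> 1" "norm (h 0) < \<delta>" "norm z \<le> 1/4"
    then show "norm (h z) \<le> 1/16" using d2 by blast
  qed
qed



lemma part2: "\<exists>R::real. \<forall>k::complex. norm k \<ge> R \<longrightarrow>
            (\<forall>f. f holomorphic_on ball 0 1 \<longrightarrow> graph_meets_Sigma k (ball 0 1) f)"
proof -
  obtain \<delta> :: real where d0: "\<delta> > 0" and dsmall:
    "\<And>h z. h holomorphic_on ball 0 1 \<Longrightarrow> (\<forall>z\<in>ball 0 1. h z \<noteq> 0 \<and> h z \<noteq> 1)
       \<Longrightarrow> norm (h 0) < \<delta> \<Longrightarrow> norm z \<le> 1/4 \<Longrightarrow> norm (h z) \<le> 1/16"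
    using small_lemma by blast
  define M where "M = max 1 (1/\<delta>)"
  define B where "B = exp(pi * exp(pi * (2 + 2 * M + 12 * (1/2) / (1 - 1/2))))"
  have Bpos: "B > 0" by (simp add: B_def)
  have schott: "norm (f w) \<le> B" if holf: "f holomorphic_on ball 0 1"
      and f01: "\<forall>z\<in>ball 0 1. f z \<noteq> 0 \<and> f z \<noteq> 1" and f0: "norm (f 0) \<le> M"
      and w: "norm w \<le> 1/4" for f w
  proof -
    define F where "F = (\<lambda>z. f (z/2))"
    have sub: "(\<lambda>z. z/2) ` cball (0::complex) 1 \<subseteq> ball 0 1"
      by (auto simp: norm_divide)
    have holF: "F holomorphic_on cball 0 1"
      unfolding F_def
      by (rule holomorphic_on_compose_gen[unfolded o_def, OF _ holf sub]) (intro holomorphic_intros; simp)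
    have "norm (F (2*w)) \<le> B"
      unfolding B_def
    proof (rule Schottky[OF holF])
      show "norm (F 0) \<le> M" using f0 by (simp add: F_def)
      show "\<And>z. z \<in> cball 0 1 \<Longrightarrow> \<not> (F z = 0 \<or> F z = 1)"
        using f01 sub unfolding F_def by blast
      show "norm (2*w) \<le> 1/2" using w by (simp add: norm_mult)
    qed auto
    then show ?thesis by (simp add: F_def)
  qed
  define R where "R = 8 * B + 1"
  show ?thesis
  proof (intro exI allI impI)
    fix k :: complex and f
    assume kR: "R \<le> norm k" and holf: "f holomorphic_on ball 0 1"
    show "graph_meets_Sigma k (ball 0 1) f"
    proof (rule ccontr)
      assume nm: "\<not> graph_meets_Sigma k (ball 0 1) f"
      then have avoid: "\<And>z. z \<in> ball 0 1 \<Longrightarrow> f z \<noteq> 0 \<and> f z \<noteq> 1 \<and> f z \<noteq> k * z \<and> z * f z \<noteq> 1"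
        by (auto simp: graph_meets_Sigma_def)
      have f01: "\<forall>z\<in>ball 0 1. f z \<noteq> 0 \<and> f z \<noteq> 1" using avoid by blast
      have kpos: "norm k > 8 * B" using kR by (simp add: R_def)
      then have k0: "k \<noteq> 0" using Bpos by auto
      show False
      proof (cases "norm (f 0) \<le> M")
        case True
        have fb: "norm (f w) \<le> B" if "norm w \<le> 1/4" for w
          using schott[OF holf f01 True that] .
        have Bk: "B / norm k < 1/8"
        proof -
          have nk: "norm k > 0" using k0 by simp
          have "B < 1/8 * norm k" using kpos by simp
          then show ?thesis using nk by (simp add: divide_less_eq)
        qed
        define p where "p = (\<lambda>z. z - f z / k)"
        have nfk: "norm (f w / k) < 1/8" if "norm w \<le> 1/4" for w
        proof -
          have "norm (f w / k) = norm (f w) / norm k" by (simp add: norm_divide)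
          also have "\<dots> \<le> B / norm k" using fb[OF that] k0 by (simp add: divide_right_mono)
          finally show ?thesis using Bk by linarith
        qed
        have "\<exists>z\<in>cball 0 (1/4). p z = 0"
        proof (rule zero_exists[where m = "1/8"])
          show "p holomorphic_on ball 0 1" unfolding p_def using holf k0 by (intro holomorphic_intros) auto
          show "norm (p 0) < 1/8" using nfk[of 0] by (simp add: p_def)
          fix z :: complex assume z: "norm z = 1/4"
          have "norm z - norm (f z / k) \<le> norm (p z)" unfolding p_def by (rule norm_triangle_ineq2)
          then show "1/8 \<le> norm (p z)" using nfk[of z] z by simp
        qed auto
        then obtain z where z: "norm z \<le> 1/4" "z = f z / k" by (auto simp: p_def)
        then have "f z = k * z" using k0 by (simp add: field_simps)
        moreover have "z \<in> ball 0 1" using z by simp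
        ultimately show False using avoid by blast
      next
        case False
        define g where "g = (\<lambda>z. inverse (f z))"
        have holg: "g holomorphic_on ball 0 1" unfolding g_def using holf f01 by (intro holomorphic_intros) auto
        have g01: "\<forall>z\<in>ball 0 1. g z \<noteq> 0 \<and> g z \<noteq> 1" using f01 by (auto simp: g_def)
        have "M \<ge> 1/\<delta>" by (simp add: M_def)
        then have "norm (f 0) > 1/\<delta>" using False by simp
        then have g0: "norm (g 0) < \<delta>"
        proof -
          have "inverse (norm (f 0)) < inverse (1/\<delta>)"
            by (rule less_imp_inverse_less) (use \<open>norm (f 0) > 1/\<delta>\<close> d0 in auto)
          then show ?thesis using d0 by (simp add: g_def norm_inverse)
        qed
        have gb: "norm (g w) \<le> 1/16" if "norm w \<le> 1/4" for w
          using dsmall[OF holg g01 g0 that] .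
        define p where "p = (\<lambda>z. z - g z)"
        have "\<exists>z\<in>cball 0 (1/4). p z = 0"
        proof (rule zero_exists[where m = "1/8"])
          show "p holomorphic_on ball 0 1" unfolding p_def using holg by (intro holomorphic_intros)
          show "norm (p 0) < 1/8" using gb[of 0] by (simp add: p_def)
          fix z :: complex assume z: "norm z = 1/4"
          have "norm z - norm (g z) \<le> norm (p z)" unfolding p_def by (rule norm_triangle_ineq2)
          then show "1/8 \<le> norm (p z)" using gb[of z] z by simp
        qed auto
        then obtain z where z: "norm z \<le> 1/4" "z = g z" by (auto simp: p_def)
        have zb: "z \<in> ball 0 1" using z by simp
        then have "f z \<noteq> 0" using avoid by blast
        then have "z * f z = 1" using z(2) by (simp add: g_def) (metis left_inverse)
        then show False using avoid zb by blast
      qed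
    qed
  qed
qed

theorem mainTheorem1:
  shows "(\<exists>k::real. k > 0 \<and>
            (\<forall>f. f holomorphic_on ball 0 1 \<longrightarrow> graph_meets_Sigma (complex_of_real k) (ball 0 1) f))
       \<and> (\<exists>R::real. \<forall>k::complex. norm k \<ge> R \<longrightarrow>
            (\<forall>f. f holomorphic_on ball 0 1 \<longrightarrow> graph_meets_Sigma k (ball 0 1) f))
       \<and> (\<forall>k::complex. \<exists>f. smooth_on (ball 0 1) f \<and> \<not> graph_meets_Sigma k (ball 0 1) f)"
proof (intro conjI allI)
  obtain R where R: "\<forall>k::complex. norm k \<ge> R \<longrightarrow>
            (\<forall>f. f holomorphic_on ball 0 1 \<longrightarrow> graph_meets_Sigma k (ball 0 1) f)"
    using part2 by blast
  show "\<exists>k::real. k > 0 \<and>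
            (\<forall>f. f holomorphic_on ball 0 1 \<longrightarrow> graph_meets_Sigma (complex_of_real k) (ball 0 1) f)"
  proof (intro exI conjI)
    show "max R 1 > 0" by simp
    have "norm (complex_of_real (max R 1)) \<ge> R" by simp
    then show "\<forall>f. f holomorphic_on ball 0 1 \<longrightarrow> graph_meets_Sigma (complex_of_real (max R 1)) (ball 0 1) f"
      using R by blast
  qed
  show "\<exists>R::real. \<forall>k::complex. norm k \<ge> R \<longrightarrow>
            (\<forall>f. f holomorphic_on ball 0 1 \<longrightarrow> graph_meets_Sigma k (ball 0 1) f)"
    by (rule part2)
  fix k :: complex
  show "\<exists>f. smooth_on (ball 0 1) f \<and> \<not> graph_meets_Sigma k (ball 0 1) f" by (rule part3)
qed

end
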